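(* Let $(G,P,g)$ be the manifold in the context and $D$ the connection defined there. Then $D$ is flat: its curvature tensor $D_xD_yz-D_yD_xz-D_{[x,y]}z$ vanishes identically.
   Context: $G$ is a 4-dimensional real connected Lie group with Lie algebra having a basis $\{X_1,\dots,X_4\}$ of left-invariant vector fields satisfying, for real numbers $\lambda_1,\dots,\lambda_4$: $[X_1,X_2]=-[X_3,X_4]=\lambda_1X_1+\lambda_2X_2+\lambda_3X_3+\lambda_4X_4$, $[X_1,X_3]=[X_2,X_4]=\lambda_4X_1-\lambda_3X_2+\lambda_2X_3-\lambda_1X_4$, $[X_2,X_3]=[X_1,X_4]=0$. $P$ is the left-invariant tensor with $PX_1=X_3$, $PX_2=X_4$, $PX_3=X_1$, $PX_4=X_2$, and $g$ the left-invariant metric making $\{X_i\}$ orthonormal. Let $\nabla$ be the Levi-Civita connection of $g$, $F(x,y,z)=g((\nabla_xP)y,z)$, $\theta(x)=\sum_iF(X_i,X_i,x)$ the Lee form, $\Omega$ the vector field with $g(\Omega,x)=\theta(x)$, and $D_xy=\nabla_xy+\frac14\{g(x,y)P\Omega-\theta(Py)x\}$. *)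

theory Defs
  imports "HOL-Analysis.Analysis"
begin

text \<open>Left-invariant vector fields on the 4-dimensional Lie group G are identified with
  their values at the identity, i.e. with the Lie algebra, modelled as \<open>real^4\<close>;
  the basis X_1,...,X_4 is the standard basis (index 4 of type \<open>4\<close> is the numeral 4 = 0).
  The metric g (making the X_i orthonormal) is the standard inner product.\<close>

definition Xb :: "4 \<Rightarrow> real^4" where
  "Xb i = axis i 1"

definition brb :: "real \<Rightarrow> real \<Rightarrow> real \<Rightarrow> real \<Rightarrow> 4 \<Rightarrow> 4 \<Rightarrow> real^4" where
  "brb l1 l2 l3 l4 i j =
     (let A = l1 *\<^sub>R Xb 1 + l2 *\<^sub>R Xb 2 + l3 *\<^sub>R Xb 3 + l4 *\<^sub>R Xb 4;
          B = l4 *\<^sub>R Xb 1 - l3 *\<^sub>R Xb 2 + l2 *\<^sub>R Xb 3 - l1 *\<^sub>R Xb 4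
      in if (i, j) = (1, 2) then A else if (i, j) = (2, 1) then - A
         else if (i, j) = (3, 4) then - A else if (i, j) = (4, 3) then A
         else if (i, j) = (1, 3) then B else if (i, j) = (3, 1) then - B
         else if (i, j) = (2, 4) then B else if (i, j) = (4, 2) then - B
         else 0)"

definition br :: "real \<Rightarrow> real \<Rightarrow> real \<Rightarrow> real \<Rightarrow> real^4 \<Rightarrow> real^4 \<Rightarrow> real^4" where
  "br l1 l2 l3 l4 x y = (\<Sum>i\<in>UNIV. \<Sum>j\<in>UNIV. (x $ i * y $ j) *\<^sub>R brb l1 l2 l3 l4 i j)"

text \<open>Levi-Civita connection on left-invariant fields (Koszul formula:
  2 g(\<nabla>_x y, z) = g([x,y],z) - g([y,z],x) + g([z,x],y)).\<close>
definition LC :: "real \<Rightarrow> real \<Rightarrow> real \<Rightarrow> real \<Rightarrow> real^4 \<Rightarrow> real^4 \<Rightarrow> real^4" where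
  "LC l1 l2 l3 l4 x y = (\<Sum>k\<in>UNIV.
      ((br l1 l2 l3 l4 x y \<bullet> Xb k - br l1 l2 l3 l4 y (Xb k) \<bullet> x
        + br l1 l2 l3 l4 (Xb k) x \<bullet> y) / 2) *\<^sub>R Xb k)"

definition Pm :: "real^4 \<Rightarrow> real^4" where
  "Pm x = x $ 1 *\<^sub>R Xb 3 + x $ 2 *\<^sub>R Xb 4 + x $ 3 *\<^sub>R Xb 1 + x $ 4 *\<^sub>R Xb 2"

definition nablaP :: "real \<Rightarrow> real \<Rightarrow> real \<Rightarrow> real \<Rightarrow> real^4 \<Rightarrow> real^4 \<Rightarrow> real^4" where
  "nablaP l1 l2 l3 l4 x y = LC l1 l2 l3 l4 x (Pm y) - Pm (LC l1 l2 l3 l4 x y)"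

definition Ften :: "real \<Rightarrow> real \<Rightarrow> real \<Rightarrow> real \<Rightarrow> real^4 \<Rightarrow> real^4 \<Rightarrow> real^4 \<Rightarrow> real" where
  "Ften l1 l2 l3 l4 x y z = nablaP l1 l2 l3 l4 x y \<bullet> z"

definition theta :: "real \<Rightarrow> real \<Rightarrow> real \<Rightarrow> real \<Rightarrow> real^4 \<Rightarrow> real" where
  "theta l1 l2 l3 l4 x = (\<Sum>i\<in>UNIV. Ften l1 l2 l3 l4 (Xb i) (Xb i) x)"

definition Omega :: "real \<Rightarrow> real \<Rightarrow> real \<Rightarrow> real \<Rightarrow> real^4" where
  "Omega l1 l2 l3 l4 = (\<Sum>k\<in>UNIV. theta l1 l2 l3 l4 (Xb k) *\<^sub>R Xb k)"

definition Dc :: "real \<Rightarrow> real \<Rightarrow> real \<Rightarrow> real \<Rightarrow> real^4 \<Rightarrow> real^4 \<Rightarrow> real^4" where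
  "Dc l1 l2 l3 l4 x y = LC l1 l2 l3 l4 x y
     + (1/4) *\<^sub>R ((x \<bullet> y) *\<^sub>R Pm (Omega l1 l2 l3 l4) - theta l1 l2 l3 l4 (Pm y) *\<^sub>R x)"

definition curvD :: "real \<Rightarrow> real \<Rightarrow> real \<Rightarrow> real \<Rightarrow> real^4 \<Rightarrow> real^4 \<Rightarrow> real^4 \<Rightarrow> real^4" where
  "curvD l1 l2 l3 l4 x y z = Dc l1 l2 l3 l4 x (Dc l1 l2 l3 l4 y z)
     - Dc l1 l2 l3 l4 y (Dc l1 l2 l3 l4 x z) - Dc l1 l2 l3 l4 (br l1 l2 l3 l4 x y) z"

end

theory Submission imports Defs begin
lemma Xb_c: "Xb i $ j = (if j = i then 1 else 0)" by (simp add: Xb_def axis_def)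
lemma br_eq: "br l1 l2 l3 l4 x y =
  (x$1*y$2 - x$2*y$1 - x$3*y$4 + x$4*y$3) *\<^sub>R (\<chi> i. if i=1 then l1 else if i=2 then l2 else if i=3 then l3 else l4)
 + (x$1*y$3 - x$3*y$1 + x$2*y$4 - x$4*y$2) *\<^sub>R (\<chi> i. if i=1 then l4 else if i=2 then -l3 else if i=3 then l2 else -l1)"
  unfolding br_def sum_4 brb_def Let_def
  by (simp add: vec_eq_iff forall_4 Xb_c algebra_simps)
lemma inner4: "(x::real^4) \<bullet> y = x$1*y$1+x$2*y$2+x$3*y$3+x$4*y$4"
  by (simp add: inner_vec_def sum_4)
lemma LC_c: "LC l1 l2 l3 l4 x y $ k = (br l1 l2 l3 l4 x y \<bullet> Xb k - br l1 l2 l3 l4 y (Xb k) \<bullet> x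
        + br l1 l2 l3 l4 (Xb k) x \<bullet> y) / 2"
  unfolding LC_def sum_4 using exhaust_4[of k] by (auto simp: Xb_c)
definition Jm :: "real^4 \<Rightarrow> real^4" where
 "Jm y = (\<chi> i. if i=1 then y$4 else if i=2 then -y$3 else if i=3 then y$2 else -y$1)"
lemma LC_eq: "LC l1 l2 l3 l4 x y = (l3*x$1 + l4*x$2 - l1*x$3 - l2*x$4) *\<^sub>R Jm y
  - (x \<bullet> y) *\<^sub>R (\<chi> i. if i=1 then -l2 else if i=2 then l1 else if i=3 then l4 else -l3)
  + (l4*y$3 - l3*y$4 - l2*y$1 + l1*y$2) *\<^sub>R x"
  unfolding vec_eq_iff forall_4 LC_c br_eq inner4 Jm_def
  by (simp add: Xb_c field_simps; simp add: algebra_simps)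
lemma Pm_c: "Pm x $ 1 = x$3" "Pm x $ 2 = x$4" "Pm x $ 3 = x$1" "Pm x $ 4 = x$2"
  by (simp_all add: Pm_def Xb_c)
lemma theta_eq: "theta l1 l2 l3 l4 x = 4*(l4*x$1 - l3*x$2 - l2*x$3 + l1*x$4)"
  unfolding theta_def sum_4 Ften_def nablaP_def inner4
  by (simp add: LC_eq Pm_c Jm_def Xb_c inner4 algebra_simps)
lemma Omega_eq: "Omega l1 l2 l3 l4 = (\<chi> i. if i=1 then 4*l4 else if i=2 then -4*l3 else if i=3 then -4*l2 else 4*l1)"
  unfolding Omega_def sum_4 theta_eq vec_eq_iff forall_4 by (simp add: Xb_c)
lemma Dc_eq: "Dc l1 l2 l3 l4 x y = (l3*x$1 + l4*x$2 - l1*x$3 - l2*x$4) *\<^sub>R Jm y"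
  unfolding Dc_def LC_eq Omega_eq theta_eq vec_eq_iff forall_4
  by (simp add: Pm_c Jm_def algebra_simps)
theorem proposition8p5:
  fixes l1 l2 l3 l4 :: real and x y z :: "real^4"
  shows "curvD l1 l2 l3 l4 x y z = 0"
  unfolding curvD_def Dc_eq br_eq vec_eq_iff forall_4
  by (simp add: Jm_def algebra_simps)
end
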